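(* Let $n$ be even, $V=V_1\sqcup V_2$ with $|V_1|=|V_2|=n/2$, and $0\le q<p\le 1$. Consider the complete weighted graph on $V$ with $w(u,v)=p$ for distinct $u,v$ in the same block, $w(u,v)=q$ for $u,v$ in different blocks, and $w(v,v)=0$. Let $\mathcal P$ be the set of all cuts $\{A,A^\complement\}$ with $A\subseteq V$, with cost $c(\{A,A^\complement\})=\sum_{u\in A,v\in A^\complement}w(u,v)$, and for $\Psi\in\mathbb R$ let $\mathcal P_\Psi=\{P\in\mathcal P: c(P)\le\Psi\}$. If the agreement parameter satisfies $a\ge2$ and $p<2q$, then for every $\Psi\in\mathbb R$ there exists at most one $\mathcal P_\Psi$-tangle.
   Context: An orientation of a set of cuts chooses one side of every cut in it. An orientation $O$ of $\mathcal P_\Psi$ is a $\mathcal P_\Psi$-tangle if for all (not necessarily distinct) chosen sides $A,B,C\in O$ we have $|A\cap B\cap C|\ge a$, where $a\in\mathbb N$ is the agreement parameter. *)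

theory Defs
  imports Complex_Main
begin

definition sbm_weight :: "'a set \<Rightarrow> 'a set \<Rightarrow> real \<Rightarrow> real \<Rightarrow> 'a \<Rightarrow> 'a \<Rightarrow> real" where
  "sbm_weight V1 V2 p q u v =
     (if u = v then 0
      else if (u \<in> V1 \<and> v \<in> V1) \<or> (u \<in> V2 \<and> v \<in> V2) then p
      else q)"

definition all_cuts :: "'a set \<Rightarrow> 'a set set set" where
  "all_cuts V = {{A, V - A} | A. A \<subseteq> V}"

definition cut_cost :: "('a \<Rightarrow> 'a \<Rightarrow> real) \<Rightarrow> 'a set \<Rightarrow> 'a set \<Rightarrow> real" where
  "cut_cost w V A = (\<Sum>u\<in>A. \<Sum>v\<in>V - A. w u v)"

text \<open>Cost of a cut P = {A, V - A} (well defined for symmetric w).\<close>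
definition cost_of_cut :: "('a \<Rightarrow> 'a \<Rightarrow> real) \<Rightarrow> 'a set \<Rightarrow> 'a set set \<Rightarrow> real" where
  "cost_of_cut w V P = cut_cost w V (SOME A. A \<in> P)"

definition cuts_le :: "('a \<Rightarrow> 'a \<Rightarrow> real) \<Rightarrow> 'a set \<Rightarrow> real \<Rightarrow> 'a set set set" where
  "cuts_le w V \<Psi> = {P \<in> all_cuts V. cost_of_cut w V P \<le> \<Psi>}"

definition is_orientation :: "'a set set set \<Rightarrow> 'a set set \<Rightarrow> bool" where
  "is_orientation S Or \<longleftrightarrow> (\<forall>A\<in>Or. \<exists>P\<in>S. A \<in> P) \<and> (\<forall>P\<in>S. card (Or \<inter> P) = 1)"

definition is_tangle :: "nat \<Rightarrow> 'a set set set \<Rightarrow> 'a set set \<Rightarrow> bool" where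
  "is_tangle a S Or \<longleftrightarrow> is_orientation S Or \<and>
     (\<forall>A\<in>Or. \<forall>B\<in>Or. \<forall>C\<in>Or. card (A \<inter> B \<inter> C) \<ge> a)"

end

theory Submission
  imports Defs
begin

lemma ineq_a:
  fixes y k m p q :: real
  assumes "0 \<le> y" "2*y \<le> k" "k \<le> m" "0 \<le> q" "0 \<le> p" "p \<le> 2*q"
  shows "y*(p*(m-y)+q*m) \<le> k*(p*(m-k)+q*m)"
proof -
  have m0: "0 \<le> m" using assms by linarith
  have "q*m \<ge> (p/2)*m" using assms m0 by (intro mult_right_mono) auto
  moreover have "p*(m-k-y) \<ge> p*(-m/2)" using assms by (intro mult_left_mono) auto
  ultimately have h: "p*(m-k-y)+q*m \<ge> 0" by (simp add: algebra_simps)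
  have "(k-y)*(p*(m-k-y)+q*m) \<ge> 0" using h assms by (intro mult_nonneg_nonneg) auto
  then show ?thesis by (simp add: algebra_simps)
qed

lemma ineq_b:
  fixes k1 k2 m p q :: real
  assumes "0 \<le> k1" "0 \<le> k2" "k1 + k2 \<le> m" "0 \<le> q" "q \<le> p" "p \<le> 2*q"
  shows "k1*(p*(m-k1)+q*m) \<le> k1*(p*(m-k1)+q*(m-k2)) + k2*(p*(m-k2)+q*(m-k1))"
proof -
  have "q*(m-2*k1) \<ge> q*(2*k2-m)" using assms by (intro mult_left_mono) auto
  moreover have "(p-q)*m \<ge> 0" "(2*q-p)*k2 \<ge> 0" using assms by auto
  ultimately have h: "p*(m-k2)+q*(m-2*k1) \<ge> 0" by (simp add: algebra_simps)
  have "k2*(p*(m-k2)+q*(m-2*k1)) \<ge> 0" using h assms by auto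
  then show ?thesis by (simp add: algebra_simps)
qed

context
  fixes V1 V2 :: "'a set" and m a :: nat and p q \<Psi> :: real
  assumes f1: "finite V1" and f2: "finite V2" and disj: "V1 \<inter> V2 = {}"
    and c1: "card V1 = m" and c2: "card V2 = m"
    and q0: "0 \<le> q" and qp: "q < p" and a2: "a \<ge> 2" and p2q: "p < 2 * q"
begin

abbreviation "w \<equiv> sbm_weight V1 V2 p q"
abbreviation "VV \<equiv> V1 \<union> V2"
abbreviation "SS \<equiv> cuts_le w VV \<Psi>"

lemma row1:
  assumes "X \<subseteq> VV" "u \<in> X \<inter> V1"
  shows "(\<Sum>v\<in>VV - X. w u v) = p * card (V1 - X) + q * card (V2 - X)"
proof -
  have "VV - X = (V1 - X) \<union> (V2 - X)" by auto
  then have "(\<Sum>v\<in>VV - X. w u v) = (\<Sum>v\<in>V1 - X. w u v) + (\<Sum>v\<in>V2 - X. w u v)"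
    using disj f1 f2 by (simp add: sum.union_disjoint Int_Diff Diff_Int_distrib2 inf_commute
        disjoint_iff)
  also have "(\<Sum>v\<in>V1 - X. w u v) = (\<Sum>v\<in>V1 - X. p)"
    using assms by (intro sum.cong) (auto simp: sbm_weight_def)
  also have "(\<Sum>v\<in>V2 - X. w u v) = (\<Sum>v\<in>V2 - X. q)"
    using assms disj by (intro sum.cong) (auto simp: sbm_weight_def)
  finally show ?thesis by simp
qed

lemma row2:
  assumes "X \<subseteq> VV" "u \<in> X \<inter> V2"
  shows "(\<Sum>v\<in>VV - X. w u v) = p * card (V2 - X) + q * card (V1 - X)"
proof -
  have "VV - X = (V1 - X) \<union> (V2 - X)" by auto
  then have "(\<Sum>v\<in>VV - X. w u v) = (\<Sum>v\<in>V1 - X. w u v) + (\<Sum>v\<in>V2 - X. w u v)"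
    using disj f1 f2 by (simp add: sum.union_disjoint disjoint_iff)
  also have "(\<Sum>v\<in>V1 - X. w u v) = (\<Sum>v\<in>V1 - X. q)"
    using assms disj by (intro sum.cong) (auto simp: sbm_weight_def)
  also have "(\<Sum>v\<in>V2 - X. w u v) = (\<Sum>v\<in>V2 - X. p)"
    using assms by (intro sum.cong) (auto simp: sbm_weight_def)
  finally show ?thesis by simp
qed

lemma cost_formula:
  assumes "X \<subseteq> VV"
  shows "cut_cost w VV X = card (X \<inter> V1) * (p * card (V1 - X) + q * card (V2 - X))
            + card (X \<inter> V2) * (p * card (V2 - X) + q * card (V1 - X))"
proof -
  have X: "X = (X \<inter> V1) \<union> (X \<inter> V2)" using assms by auto
  have fin: "finite (X \<inter> V1)" "finite (X \<inter> V2)" using f1 f2 by auto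
  have "cut_cost w VV X = (\<Sum>u\<in>X \<inter> V1. \<Sum>v\<in>VV - X. w u v) + (\<Sum>u\<in>X \<inter> V2. \<Sum>v\<in>VV - X. w u v)"
    unfolding cut_cost_def using disj fin
    by (subst X, subst sum.union_disjoint) auto
  also have "(\<Sum>u\<in>X \<inter> V1. \<Sum>v\<in>VV - X. w u v) = (\<Sum>u\<in>X \<inter> V1. p * card (V1 - X) + q * card (V2 - X))"
    using row1 assms by (intro sum.cong) auto
  also have "(\<Sum>u\<in>X \<inter> V2. \<Sum>v\<in>VV - X. w u v) = (\<Sum>u\<in>X \<inter> V2. p * card (V2 - X) + q * card (V1 - X))"
    using row2 assms by (intro sum.cong) auto
  finally show ?thesis by simp
qed

lemma card_rest1:
  "real (card (V1 - X)) = real m - real (card (X \<inter> V1))"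
proof -
  have "card (V1 - X) = card V1 - card (V1 \<inter> X)" using f1 by (simp add: card_Diff_subset_Int)
  moreover have "card (V1 \<inter> X) \<le> card V1" using f1 by (simp add: card_mono)
  ultimately show ?thesis using c1 by (simp add: Int_commute of_nat_diff)
qed

lemma card_rest2:
  "real (card (V2 - X)) = real m - real (card (X \<inter> V2))"
proof -
  have "card (V2 - X) = card V2 - card (V2 \<inter> X)" using f2 by (simp add: card_Diff_subset_Int)
  moreover have "card (V2 \<inter> X) \<le> card V2" using f2 by (simp add: card_mono)
  ultimately show ?thesis using c2 by (simp add: Int_commute of_nat_diff)
qed

lemma cost_sym:
  assumes "X \<subseteq> VV"
  shows "cut_cost w VV (VV - X) = cut_cost w VV X"
proof -
  have e1: "(VV - X) \<inter> V1 = V1 - X" "(VV - X) \<inter> V2 = V2 - X" by auto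
  have e2: "V1 - (VV - X) = X \<inter> V1" "V2 - (VV - X) = X \<inter> V2" by auto
  show ?thesis using cost_formula[OF assms] cost_formula[of "VV - X"]
    by (simp add: e1 e2 algebra_simps)
qed

lemma cost_single:
  assumes "X \<subseteq> V1 \<or> X \<subseteq> V2"
  shows "cut_cost w VV X = card X * (p * (real m - card X) + q * real m)"
proof (cases "X \<subseteq> V1")
  case True
  then have "X \<inter> V1 = X" "X \<inter> V2 = {}" "V2 - X = V2" using disj by auto
  then show ?thesis using cost_formula[of X] True card_rest1[of X] c2 by auto
next
  case False
  then have T: "X \<subseteq> V2" using assms by auto
  then have "X \<inter> V2 = X" "X \<inter> V1 = {}" "V1 - X = V1" using disj by auto
  then show ?thesis using cost_formula[of X] T card_rest2[of X] c1 by auto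
qed

lemma cost_cut:
  assumes "X \<subseteq> VV"
  shows "cost_of_cut w VV {X, VV - X} = cut_cost w VV X"
proof -
  have "(SOME A. A \<in> {X, VV - X}) \<in> {X, VV - X}" by (rule someI[of _ X]) auto
  then show ?thesis unfolding cost_of_cut_def using cost_sym[OF assms] by auto
qed

lemma inS:
  assumes "X \<subseteq> VV" "cut_cost w VV X \<le> \<Psi>"
  shows "{X, VV - X} \<in> SS"
  using assms cost_cut[OF assms(1)] unfolding cuts_le_def all_cuts_def by auto

lemma t_side:
  assumes "is_tangle a SS T" "X \<in> T"
  shows "X \<subseteq> VV \<and> cut_cost w VV X \<le> \<Psi>"
proof -
  obtain P where P: "P \<in> SS" "X \<in> P" using assms unfolding is_tangle_def is_orientation_def by blast
  then obtain A where A: "A \<subseteq> VV" "P = {A, VV - A}" unfolding cuts_le_def all_cuts_def by auto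
  have XV: "X \<subseteq> VV" using A P by auto
  have "P = {X, VV - X}" using A P XV by auto
  then show ?thesis using XV P cost_cut[OF XV] unfolding cuts_le_def by auto
qed

lemma t_pick:
  assumes "is_tangle a SS T" "Y \<subseteq> VV" "cut_cost w VV Y \<le> \<Psi>"
  shows "Y \<in> T \<or> VV - Y \<in> T"
proof -
  have "card (T \<inter> {Y, VV - Y}) = 1" using assms inS unfolding is_tangle_def is_orientation_def by auto
  then have "T \<inter> {Y, VV - Y} \<noteq> {}" by (metis card.empty zero_neq_one)
  then show ?thesis by auto
qed

lemma t_triple:
  assumes "is_tangle a SS T" "A \<in> T" "B \<in> T" "C \<in> T"
  shows "a \<le> card (A \<inter> B \<inter> C)"
  using assms unfolding is_tangle_def by blast

lemma t_split:
  assumes "is_tangle a SS T" "X \<in> T" "Y \<subseteq> VV" "cut_cost w VV Y \<le> \<Psi>"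
    "Z \<subseteq> VV" "cut_cost w VV Z \<le> \<Psi>" "card (X \<inter> (VV - Y) \<inter> (VV - Z)) \<le> 1"
  shows "Y \<in> T \<or> Z \<in> T"
proof (rule ccontr)
  assume "\<not> (Y \<in> T \<or> Z \<in> T)"
  then have "VV - Y \<in> T" "VV - Z \<in> T" using t_pick assms by blast+
  then have "a \<le> card (X \<inter> (VV - Y) \<inter> (VV - Z))" using t_triple assms by blast
  then show False using assms a2 by linarith
qed

lemma main:
  assumes "is_tangle a SS T"
  shows "X \<in> T \<Longrightarrow> card X \<le> m \<Longrightarrow> False"
proof (induction "card X" arbitrary: X rule: less_induct)
  case less
  have XV: "X \<subseteq> VV" and cX: "cut_cost w VV X \<le> \<Psi>" using t_side[OF assms less(2)] by auto
  have finX: "finite X" using XV f1 f2 finite_subset by blast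
  show False
  proof (cases "card X \<le> 1")
    case True
    then show False using t_triple[OF assms less(2) less(2) less(2)] a2 by simp
  next
    case big: False
    show False
    proof (cases "X \<subseteq> V1 \<or> X \<subseteq> V2")
      case True
      define k where "k = card X"
      obtain Y where Y: "Y \<subseteq> X" "card Y = k div 2" "finite Y"
        using obtain_subset_with_card_n[of "k div 2" X] k_def by auto
      have "k div 2 \<le> card (X - Y)" using Y finX k_def by (simp add: card_Diff_subset)
      then obtain Z where Z: "Z \<subseteq> X - Y" "card Z = k div 2" "finite Z"
        using obtain_subset_with_card_n[of "k div 2" "X - Y"] by auto
      have "card (X - Y - Z) = card (X - Y) - card Z" using Z finX by (simp add: card_Diff_subset)
      also have "\<dots> = k - k div 2 - k div 2" using Y finX k_def Z by (simp add: card_Diff_subset)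
      finally have "card (X - Y - Z) \<le> 1" by linarith
      moreover have "X \<inter> (VV - Y) \<inter> (VV - Z) = X - Y - Z" using XV by auto
      ultimately have rest: "card (X \<inter> (VV - Y) \<inter> (VV - Z)) \<le> 1" by simp
      have ck: "real k \<le> real m" using less(3) k_def by simp
      have cs: "cut_cost w VV W \<le> cut_cost w VV X" if "W \<subseteq> X" "card W = k div 2" for W
      proof -
        have "W \<subseteq> V1 \<or> W \<subseteq> V2" using True that by blast
        then have "cut_cost w VV W = real (k div 2) * (p * (real m - real (k div 2)) + q * real m)"
          using cost_single that by simp
        also have "\<dots> \<le> real k * (p * (real m - real k) + q * real m)"
          using ck q0 qp p2q by (intro ineq_a) linarith+
        also have "\<dots> = cut_cost w VV X" using cost_single[OF True] k_def by simp
        finally show ?thesis .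
      qed
      have ZX: "Z \<subseteq> X" using Z by auto
      have YV: "Y \<subseteq> VV" "Z \<subseteq> VV" using Y ZX XV by auto
      have YP: "cut_cost w VV Y \<le> \<Psi>" using cs[OF Y(1,2)] cX by linarith
      have ZP: "cut_cost w VV Z \<le> \<Psi>" using cs[OF ZX Z(2)] cX by linarith
      have YO: "Y \<in> T \<or> Z \<in> T" by (rule t_split[OF assms less(2) YV(1) YP YV(2) ZP rest])
      have lt: "k div 2 < k" using big k_def by simp
      show False
      proof (cases "Y \<in> T")
        case True
        show False by (rule less(1)[of Y]) (use True Y lt k_def less(3) in auto)
      next
        case False
        then have "Z \<in> T" using YO by blast
        show False by (rule less(1)[of Z]) (use \<open>Z \<in> T\<close> Z lt k_def less(3) in auto)
      qed
    next
      case False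
      define Y where "Y = X \<inter> V1"
      define Z where "Z = X \<inter> V2"
      have Yne: "Y \<noteq> {}" and Zne: "Z \<noteq> {}" using False XV Y_def Z_def by auto
      have XYZ: "X = Y \<union> Z" "Y \<inter> Z = {}" using XV disj Y_def Z_def by auto
      have fY: "finite Y" "finite Z" using finX Y_def Z_def by auto
      have cXs: "card X = card Y + card Z" using XYZ fY by (simp add: card_Un_disjoint)
      have cY0: "card Y > 0" "card Z > 0" using Yne Zne fY by auto
      have rest: "card (X \<inter> (VV - Y) \<inter> (VV - Z)) \<le> 1"
      proof -
        have "X \<inter> (VV - Y) \<inter> (VV - Z) = {}" using XYZ by auto
        then show ?thesis by simp
      qed
      have ckm: "real (card Y) + real (card Z) \<le> real m" using cXs less(3) by simp
      have cform: "cut_cost w VV X = card Y * (p * (real m - card Y) + q * (real m - card Z))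
            + card Z * (p * (real m - card Z) + q * (real m - card Y))"
        using cost_formula[OF XV] card_rest1[of X] card_rest2[of X] Y_def Z_def by simp
      have cYv: "cut_cost w VV Y = card Y * (p * (real m - card Y) + q * real m)"
        using cost_single Y_def by simp
      have cZv: "cut_cost w VV Z = card Z * (p * (real m - card Z) + q * real m)"
        using cost_single Z_def by simp
      have "cut_cost w VV Y \<le> cut_cost w VV X"
        unfolding cYv cform using ckm q0 qp p2q by (intro ineq_b) auto
      moreover have "cut_cost w VV Z \<le> cut_cost w VV X"
      proof -
        have "cut_cost w VV Z \<le> card Z * (p * (real m - card Z) + q * (real m - card Y))
            + card Y * (p * (real m - card Y) + q * (real m - card Z))"
          unfolding cZv using ckm q0 qp p2q by (intro ineq_b) auto
        then show ?thesis unfolding cform by simp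
      qed
      ultimately have YP: "cut_cost w VV Y \<le> \<Psi>" "cut_cost w VV Z \<le> \<Psi>" using cX by linarith+
      have YV: "Y \<subseteq> VV" "Z \<subseteq> VV" using XYZ XV by auto
      have YO: "Y \<in> T \<or> Z \<in> T" by (rule t_split[OF assms less(2) YV(1) YP(1) YV(2) YP(2) rest])
      show False
      proof (cases "Y \<in> T")
        case True
        show False by (rule less(1)[of Y]) (use True cXs cY0 less(3) in auto)
      next
        case False
        then have "Z \<in> T" using YO by blast
        show False by (rule less(1)[of Z]) (use \<open>Z \<in> T\<close> cXs cY0 less(3) in auto)
      qed
    qed
  qed
qed

lemma t_other:
  assumes "is_tangle a SS T" "is_tangle a SS U" "X \<in> T" "X \<notin> U"
  shows "VV - X \<in> U"
  using t_pick[OF assms(2)] t_side[OF assms(1,3)] assms(4) by blast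

lemma uniq:
  assumes "is_tangle a SS T" "is_tangle a SS U" "X \<in> T"
  shows "X \<in> U"
proof (rule ccontr)
  assume nX: "X \<notin> U"
  have XV: "X \<subseteq> VV" using t_side[OF assms(1,3)] by simp
  have o: "VV - X \<in> U" using t_other assms nX by blast
  have fX: "finite X" using XV f1 f2 finite_subset by blast
  have cV: "card VV = 2 * m" using f1 f2 disj c1 c2 by (simp add: card_Un_disjoint)
  have "card X \<le> card VV" using XV f1 f2 by (simp add: card_mono)
  moreover have "card (VV - X) = card VV - card X" using XV fX by (simp add: card_Diff_subset)
  ultimately have "card (VV - X) + card X = 2 * m" using cV by simp
  then have "card X \<le> m \<or> card (VV - X) \<le> m" by linarith
  then show False using main[OF assms(1) assms(3)] main[OF assms(2) o] by blast
qed

end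

theorem theorem3:
  fixes V1 V2 :: "'a set" and n a :: nat and p q \<Psi> :: real
  assumes "even n"
    and "finite V1" and "finite V2" and "V1 \<inter> V2 = {}"
    and "card V1 = n div 2" and "card V2 = n div 2"
    and "0 \<le> q" and "q < p" and "p \<le> 1"
    and "a \<ge> 2" and "p < 2 * q"
  shows "\<forall>O1 O2. is_tangle a (cuts_le (sbm_weight V1 V2 p q) (V1 \<union> V2) \<Psi>) O1
                \<and> is_tangle a (cuts_le (sbm_weight V1 V2 p q) (V1 \<union> V2) \<Psi>) O2
                \<longrightarrow> O1 = O2"
  using uniq[OF assms(2,3,4,5,6,7,8,10,11)] by blast

end
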